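(* Let $G$ be a graph on $n$ vertices with a Hamilton cycle $C$, let $k\ge 2$ divide $n$, let $s\ge n/k$, and let $\Pi$ be a noncanonical $(k,s)$-BCP of $G$. If $\Pi$ has a singleton district, then there is a sequence of at most $k-1$ recombination moves (through $(k,s)$-BCPs) that yields a $(k,s)$-BCP with strictly fewer fragments than $\Pi$.
   Context: A $(k,s)$-BCP of a graph $G$ on $n$ vertices is a partition of $V(G)$ into $k$ nonempty sets (districts), each inducing a connected subgraph, with $\big||U|-n/k\big|\le s$ for every district $U$. A recombination move replaces two districts $V_i,V_j$ by two sets $W_i,W_j$ with $W_i\cup W_j=V_i\cup V_j$ such that the result is again a $(k,s)$-BCP (different from the original), other districts unchanged. Given a Hamilton cycle $C$: the partition is canonical if each district consists of consecutive vertices along $C$; a fragment of a district is a maximal subset of it of vertices contiguous along $C$; the number of fragments of a partition is the sum over districts of their numbers of fragments. *)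

theory Defs
  imports Complex_Main "HOL-Library.Disjoint_Sets"
begin

definition graph :: "'a set \<Rightarrow> ('a \<Rightarrow> 'a \<Rightarrow> bool) \<Rightarrow> bool" where
  "graph V E \<longleftrightarrow> finite V \<and> (\<forall>x y. E x y \<longrightarrow> x \<in> V \<and> y \<in> V \<and> x \<noteq> y \<and> E y x)"

definition hamilton_cycle :: "'a set \<Rightarrow> ('a \<Rightarrow> 'a \<Rightarrow> bool) \<Rightarrow> (nat \<Rightarrow> 'a) \<Rightarrow> bool" where
  "hamilton_cycle V E c \<longleftrightarrow> card V \<ge> 3 \<and> bij_betw c {0..<card V} V \<and>
     (\<forall>i < card V. E (c i) (c (Suc i mod card V)))"

definition induced_connected :: "('a \<Rightarrow> 'a \<Rightarrow> bool) \<Rightarrow> 'a set \<Rightarrow> bool" where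
  "induced_connected E U \<longleftrightarrow>
     (\<forall>x\<in>U. \<forall>y\<in>U. (x, y) \<in> (Restr {(a, b). E a b} U)\<^sup>*)"

definition BCP :: "'a set \<Rightarrow> ('a \<Rightarrow> 'a \<Rightarrow> bool) \<Rightarrow> nat \<Rightarrow> real \<Rightarrow> 'a set set \<Rightarrow> bool" where
  "BCP V E k s P \<longleftrightarrow> partition_on V P \<and> card P = k \<and>
     (\<forall>U\<in>P. induced_connected E U \<and> \<bar>real (card U) - real (card V) / real k\<bar> \<le> s)"

definition recomb_move :: "'a set \<Rightarrow> ('a \<Rightarrow> 'a \<Rightarrow> bool) \<Rightarrow> nat \<Rightarrow> real \<Rightarrow> 'a set set \<Rightarrow> 'a set set \<Rightarrow> bool" where
  "recomb_move V E k s P Q \<longleftrightarrow>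
     (\<exists>Vi Vj Wi Wj. Vi \<in> P \<and> Vj \<in> P \<and> Vi \<noteq> Vj \<and> Wi \<union> Wj = Vi \<union> Vj \<and>
        Q = (P - {Vi, Vj}) \<union> {Wi, Wj}) \<and> BCP V E k s Q \<and> Q \<noteq> P"

definition contiguous :: "nat \<Rightarrow> (nat \<Rightarrow> 'a) \<Rightarrow> 'a set \<Rightarrow> bool" where
  "contiguous n c F \<longleftrightarrow> (\<exists>a m. 1 \<le> m \<and> m \<le> n \<and> F = {c ((a + i) mod n) | i. i < m})"

definition canonical :: "'a set \<Rightarrow> (nat \<Rightarrow> 'a) \<Rightarrow> 'a set set \<Rightarrow> bool" where
  "canonical V c P \<longleftrightarrow> (\<forall>U\<in>P. contiguous (card V) c U)"

definition fragments :: "'a set \<Rightarrow> (nat \<Rightarrow> 'a) \<Rightarrow> 'a set \<Rightarrow> 'a set set" where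
  "fragments V c U = {F. F \<subseteq> U \<and> contiguous (card V) c F \<and>
       (\<forall>F'. F \<subseteq> F' \<and> F' \<subseteq> U \<and> contiguous (card V) c F' \<longrightarrow> F' = F)}"

definition num_fragments :: "'a set \<Rightarrow> (nat \<Rightarrow> 'a) \<Rightarrow> 'a set set \<Rightarrow> nat" where
  "num_fragments V c P = (\<Sum>U\<in>P. card (fragments V c U))"

end

theory Submission imports Defs begin

locale hc =
  fixes V :: "'a set" and E :: "'a \<Rightarrow> 'a \<Rightarrow> bool" and c :: "nat \<Rightarrow> 'a"
  assumes gr: "graph V E" and ham: "hamilton_cycle V E c"
begin

abbreviation "n \<equiv> card V"

definition nx :: "'a \<Rightarrow> 'a" where
  "nx x = c (Suc (the_inv_into {0..<n} c x) mod n)"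

lemma n3: "n \<ge> 3" using ham unfolding hamilton_cycle_def by auto
lemma finV: "finite V" using gr unfolding graph_def by auto
lemma bij: "bij_betw c {0..<n} V" using ham unfolding hamilton_cycle_def by auto
lemma injc: "inj_on c {0..<n}" using bij unfolding bij_betw_def by simp
lemma imc: "c ` {0..<n} = V" using bij unfolding bij_betw_def by simp
lemma cV: "a < n \<Longrightarrow> c a \<in> V" using imc by auto
lemma Vc: "x \<in> V \<Longrightarrow> \<exists>a<n. x = c a"
proof -
  assume "x \<in> V" then have "x \<in> c ` {0..<n}" using imc by simp
  then show ?thesis by force
qed

lemma mod2: "x < 2*n \<Longrightarrow> x mod n = (if x < n then x else x - n)"
  by (simp add: le_mod_geq)

lemma nx_c: "a < n \<Longrightarrow> nx (c a) = c (Suc a mod n)"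
  unfolding nx_def using the_inv_into_f_f[OF injc] by auto

lemma nxpow_c: "a < n \<Longrightarrow> (nx^^i) (c a) = c ((a + i) mod n)"
proof (induction i)
  case 0 then show ?case by simp
next
  case (Suc i)
  have "n > 0" using n3 by auto
  then have "(a+i) mod n < n" by auto
  then have "nx (c ((a + i) mod n)) = c (Suc ((a+i) mod n) mod n)" by (rule nx_c)
  also have "Suc ((a+i) mod n) mod n = (a + Suc i) mod n" by (simp add: mod_Suc_eq)
  finally show ?case using Suc by simp
qed

lemma nx_in: "x \<in> V \<Longrightarrow> nx x \<in> V"
proof -
  assume "x \<in> V" then obtain a where a: "a < n" "x = c a" using Vc by auto
  have "n > 0" using n3 by auto
  then show ?thesis using a nx_c cV by auto
qed

lemma nxpow_in: "x \<in> V \<Longrightarrow> (nx^^i) x \<in> V"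
  by (induction i) (auto simp: nx_in)

lemma pos_inj: assumes "x \<in> V" "i < n" "j < n" "(nx^^i) x = (nx^^j) x" shows "i = j"
proof -
  obtain a where a: "a < n" "x = c a" using Vc assms(1) by auto
  have "n > 0" using n3 by auto
  then have "c ((a+i) mod n) = c ((a+j) mod n)" using assms a nxpow_c by auto
  then have "(a+i) mod n = (a+j) mod n" using injc \<open>n>0\<close> by (auto dest: inj_onD)
  moreover have "a + i < 2*n" "a + j < 2*n" using a assms by auto
  ultimately show ?thesis using mod2[of "a+i"] mod2[of "a+j"] assms(2,3) a(1) by (auto split: if_splits)
qed

lemma nx_inj: assumes "x \<in> V" "y \<in> V" "nx x = nx y" shows "x = y"
proof -
  obtain a where a: "a < n" "x = c a" using Vc assms(1) by auto
  obtain b where b: "b < n" "y = c b" using Vc assms(2) by auto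
  have "n > 0" using n3 by auto
  have "c (Suc a mod n) = c (Suc b mod n)" using assms a b nx_c by auto
  then have "Suc a mod n = Suc b mod n" using injc \<open>n>0\<close> by (auto dest: inj_onD)
  moreover have "Suc a < 2*n" "Suc b < 2*n" using a b by auto
  ultimately have "a = b" using mod2[of "Suc a"] mod2[of "Suc b"] a b by (auto split: if_splits)
  then show ?thesis using a b by simp
qed

lemma surj_pos: assumes "x \<in> V" "y \<in> V" shows "\<exists>j<n. (nx^^j) x = y"
proof -
  obtain a where a: "a < n" "x = c a" using Vc assms(1) by auto
  obtain b where b: "b < n" "y = c b" using Vc assms(2) by auto
  define j where "j = (if a \<le> b then b - a else b + n - a)"
  have "n > 0" using n3 by auto
  have "(a + j) mod n = b" unfolding j_def using a b
    by (cases "a \<le> b") auto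
  moreover have "j < n" unfolding j_def using a b by auto
  ultimately show ?thesis using a b nxpow_c by (intro exI[of _ j]) auto
qed

lemma edge: assumes "x \<in> V" shows "E x (nx x)" "E (nx x) x"
proof -
  obtain a where a: "a < n" "x = c a" using Vc assms(1) by auto
  have "E (c a) (c (Suc a mod n))" using ham a unfolding hamilton_cycle_def by auto
  then show "E x (nx x)" using a nx_c by auto
  then show "E (nx x) x" using gr unfolding graph_def by auto
qed

definition arc :: "'a \<Rightarrow> nat \<Rightarrow> 'a set" where
  "arc x m = (\<lambda>i. (nx^^i) x) ` {..<m}"

lemma arc_sub: "x \<in> V \<Longrightarrow> arc x m \<subseteq> V"
  unfolding arc_def using nxpow_in by auto

lemma card_arc: assumes "x \<in> V" "m \<le> n" shows "card (arc x m) = m"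
proof -
  have "inj_on (\<lambda>i. (nx^^i) x) {..<m}"
    using pos_inj[OF assms(1)] assms(2) by (auto intro!: inj_onI)
  then show ?thesis unfolding arc_def by (simp add: card_image)
qed

lemma contig_iff: "contiguous n c F \<longleftrightarrow> (\<exists>x\<in>V. \<exists>m. 1 \<le> m \<and> m \<le> n \<and> F = arc x m)"
proof
  assume "contiguous n c F"
  then obtain a m where am: "1 \<le> m" "m \<le> n" "F = {c ((a + i) mod n) | i. i < m}"
    unfolding contiguous_def by auto
  have "n > 0" using n3 by auto
  have e: "\<And>i. (nx^^i) (c (a mod n)) = c ((a+i) mod n)"
    using nxpow_c[of "a mod n"] \<open>n>0\<close> by (simp add: mod_add_left_eq)
  have "F = arc (c (a mod n)) m" unfolding am arc_def e by auto
  then show "\<exists>x\<in>V. \<exists>m. 1 \<le> m \<and> m \<le> n \<and> F = arc x m" using am cV \<open>n>0\<close> by auto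
next
  assume "\<exists>x\<in>V. \<exists>m. 1 \<le> m \<and> m \<le> n \<and> F = arc x m"
  then obtain x m where xm: "x \<in> V" "1 \<le> m" "m \<le> n" "F = arc x m" by auto
  obtain a where a: "a < n" "x = c a" using Vc xm(1) by auto
  have "F = {c ((a + i) mod n) | i. i < m}" unfolding xm arc_def using nxpow_c a by auto
  then show "contiguous n c F" unfolding contiguous_def using xm by auto
qed

lemma arc_Suc: "arc x (Suc m) = insert ((nx^^m) x) (arc x m)"
  unfolding arc_def by (auto simp: lessThan_Suc)

lemma arc_Suc': "arc x (Suc m) = insert x (arc (nx x) m)"
proof -
  have "(\<lambda>i. (nx^^i) x) ` Suc ` {..<m} = (\<lambda>i. (nx^^i) (nx x)) ` {..<m}"
    by (simp add: image_image funpow_swap1)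
  then show ?thesis unfolding arc_def lessThan_Suc_eq_insert_0 by simp
qed

lemma arc_add: "arc x (i + j) = arc x i \<union> arc ((nx^^i) x) j"
proof (induction j)
  case 0 then show ?case by (simp add: arc_def)
next
  case (Suc j)
  have e: "(nx^^(i+j)) x = (nx^^j) ((nx^^i) x)" by (metis add.commute comp_apply funpow_add)
  have "arc x (i + Suc j) = insert ((nx^^(i+j)) x) (arc x (i+j))" using arc_Suc[of x "i+j"] by simp
  also have "\<dots> = arc x i \<union> arc ((nx^^i) x) (Suc j)" unfolding Suc e arc_Suc[of "(nx^^i) x" j] by auto
  finally show ?case .
qed

lemma arc_full: "x \<in> V \<Longrightarrow> arc x n = V"
proof
  assume x: "x \<in> V"
  show "arc x n \<subseteq> V" using arc_sub x .
  show "V \<subseteq> arc x n"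
  proof
    fix y assume "y \<in> V"
    then obtain j where "j < n" "(nx^^j) x = y" using surj_pos x by blast
    then show "y \<in> arc x n" unfolding arc_def by auto
  qed
qed

lemma conn_def': "induced_connected E U \<longleftrightarrow> (\<forall>x\<in>U. \<forall>y\<in>U. (x, y) \<in> (Restr {(a, b). E a b} U)\<^sup>*)"
  by (simp add: induced_connected_def)


lemma arc_mono: "m \<le> m' \<Longrightarrow> arc x m \<subseteq> arc x m'"
  unfolding arc_def by auto

lemma arc_self: "1 \<le> m \<Longrightarrow> x \<in> arc x m"
  unfolding arc_def by (auto intro: image_eqI[of _ _ 0])

lemma arc_mem: "y \<in> arc x m \<longleftrightarrow> (\<exists>i<m. y = (nx^^i) x)"
  unfolding arc_def by auto

lemma arc_contig: "x \<in> V \<Longrightarrow> 1 \<le> m \<Longrightarrow> m \<le> n \<Longrightarrow> contiguous n c (arc x m)"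
  unfolding contig_iff by blast

lemma arc_memI: "i < m \<Longrightarrow> (nx^^i) x \<in> arc x m"
  unfolding arc_def by auto

lemma frag_contig: assumes "contiguous n c U" shows "fragments V c U = {U}"
proof -
  have "U \<in> fragments V c U" using assms unfolding fragments_def by auto
  moreover have "F = U" if "F \<in> fragments V c U" for F
    using that assms unfolding fragments_def by auto
  ultimately show ?thesis by blast
qed

lemma card_frag_contig: "contiguous n c U \<Longrightarrow> card (fragments V c U) = 1"
  using frag_contig by simp

definition len :: "'a set \<Rightarrow> 'a \<Rightarrow> nat" where
  "len U a = (LEAST j. (nx^^j) a \<notin> U)"

lemma len_props:
  assumes "U \<subseteq> V" "U \<noteq> V" "a \<in> V"
  shows "len U a < n" "(nx^^(len U a)) a \<notin> U" "\<And>j. j < len U a \<Longrightarrow> (nx^^j) a \<in> U"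
proof -
  obtain y where y: "y \<in> V" "y \<notin> U" using assms by blast
  then obtain j where j: "j < n" "(nx^^j) a = y" using surj_pos assms(3) by blast
  have ex: "\<exists>j. (nx^^j) a \<notin> U" using j y by auto
  show "(nx^^(len U a)) a \<notin> U" unfolding len_def using LeastI_ex[OF ex] .
  have "len U a \<le> j" unfolding len_def using j y by (auto intro: Least_le)
  then show "len U a < n" using j by simp
  show "\<And>j. j < len U a \<Longrightarrow> (nx^^j) a \<in> U" unfolding len_def using not_less_Least by blast
qed

lemma len_pos: assumes "U \<subseteq> V" "U \<noteq> V" "a \<in> U" shows "1 \<le> len U a"
proof -
  have "a \<in> V" using assms by auto
  then have "(nx^^(len U a)) a \<notin> U" using len_props(2)[OF assms(1,2)] by blast
  then show ?thesis using assms(3) by (cases "len U a") auto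
qed

lemma frag_S:
  assumes U: "U \<subseteq> V" "U \<noteq> V"
  shows "card (fragments V c U) = card (U - nx ` U)"
proof -
  let ?S = "U - nx ` U"
  let ?g = "\<lambda>a. arc a (len U a)"
  have aV: "a \<in> V" if "a \<in> U" for a using that U by auto
  have L2: "?g a \<in> fragments V c U" if a: "a \<in> ?S" for a
  proof -
    have aU: "a \<in> U" using a by auto
    note lp = len_props[OF U aV[OF aU]]
    have sub: "?g a \<subseteq> U" using lp(3) unfolding arc_def by auto
    have ctg: "contiguous n c (?g a)" unfolding contig_iff
      using aV[OF aU] len_pos[OF U aU] lp(1)
      by (intro bexI[of _ a] exI[of _ "len U a"]) auto
    have "F' = ?g a" if F': "?g a \<subseteq> F'" "F' \<subseteq> U" "contiguous n c F'" for F'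
    proof -
      obtain b m where bm: "b \<in> V" "1 \<le> m" "m \<le> n" "F' = arc b m" using F'(3) contig_iff by auto
      have "m \<noteq> n" using bm arc_full F'(2) U by auto
      then have mn: "m < n" using bm by auto
      have "a \<in> F'" using F'(1) arc_self len_pos[OF U aU] by blast
      then obtain i where i: "i < m" "a = (nx^^i) b" using bm arc_mem by auto
      have "i = 0"
      proof (rule ccontr)
        assume "i \<noteq> 0"
        then obtain i' where "i = Suc i'" by (cases i) auto
        then have 1: "a = nx ((nx^^i') b)" using i by simp
        have "i' < m" using \<open>i = Suc i'\<close> i(1) by simp
        then have "(nx^^i') b \<in> F'" unfolding bm(4) arc_mem by blast
        then show False using 1 a F'(2) by auto
      qed
      then have ba: "b = a" using i by simp
      have "m \<le> len U a"
      proof (rule ccontr)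
        assume "\<not> m \<le> len U a"
        then have "(nx^^(len U a)) a \<in> F'" using bm ba arc_memI by auto
        then show False using lp(2) F'(2) by auto
      qed
      then have "F' \<subseteq> ?g a" using bm ba arc_mono by auto
      then show ?thesis using F'(1) by auto
    qed
    then show ?thesis unfolding fragments_def using sub ctg by auto
  qed
  have L3: "inj_on ?g ?S"
  proof (rule inj_onI)
    fix a b assume a: "a \<in> ?S" and b: "b \<in> ?S" and e: "?g a = ?g b"
    have "a \<in> ?g b" using e arc_self len_pos[OF U] a by auto
    then obtain i where i: "i < len U b" "a = (nx^^i) b" using arc_mem by auto
    show "a = b"
    proof (cases i)
      case 0 then show ?thesis using i by simp
    next
      case (Suc i')
      then have "a = nx ((nx^^i') b)" "(nx^^i') b \<in> U"
        using i len_props(3)[OF U aV] b by auto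
      then show ?thesis using a by auto
    qed
  qed
  have L4: "F \<in> ?g ` ?S" if F: "F \<in> fragments V c U" for F
  proof -
    have FU: "F \<subseteq> U" and Fc: "contiguous n c F"
      and Fmax: "\<And>F'. F \<subseteq> F' \<Longrightarrow> F' \<subseteq> U \<Longrightarrow> contiguous n c F' \<Longrightarrow> F' = F"
      using F unfolding fragments_def by auto
    obtain b m where bm: "b \<in> V" "1 \<le> m" "m \<le> n" "F = arc b m" using Fc contig_iff by auto
    have "m \<noteq> n" using bm arc_full FU U by auto
    then have mn: "m < n" using bm by auto
    have bU: "b \<in> U" using FU bm arc_self by auto
    have bS: "b \<notin> nx ` U"
    proof
      assume "b \<in> nx ` U"
      then obtain y where y: "y \<in> U" "b = nx y" by auto
      have yV: "y \<in> V" using y U by auto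
      have F'e: "arc y (Suc m) = insert y F" using arc_Suc' y bm by simp
      have "arc y (Suc m) \<subseteq> U" using F'e y FU by auto
      moreover have "contiguous n c (arc y (Suc m))" using arc_contig yV mn by auto
      ultimately have "arc y (Suc m) = F" using Fmax F'e by auto
      then have "Suc m = m" using card_arc[OF yV, of "Suc m"] card_arc[OF bm(1) bm(3)] mn bm by simp
      then show False by simp
    qed
    note lp = len_props[OF U bm(1)]
    have "m \<le> len U b"
    proof (rule ccontr)
      assume "\<not> m \<le> len U b"
      then have "(nx^^(len U b)) b \<in> F" using bm arc_memI by auto
      then show False using lp(2) FU by auto
    qed
    then have "F \<subseteq> ?g b" using bm arc_mono by auto
    moreover have "?g b \<subseteq> U" using lp(3) unfolding arc_def by auto
    moreover have "contiguous n c (?g b)" unfolding contig_iff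
      using bm(1) len_pos[OF U bU] lp(1) by (intro bexI[of _ b] exI[of _ "len U b"]) auto
    ultimately have "?g b = F" using Fmax by auto
    then show ?thesis using bU bS by auto
  qed
  have "?g ` ?S = fragments V c U" using L2 L4 by auto
  then have "bij_betw ?g ?S (fragments V c U)" using L3 unfolding bij_betw_def by auto
  then show ?thesis by (simp add: bij_betw_same_card)
qed

lemma Esym: "E x y \<Longrightarrow> E y x" using gr unfolding graph_def by auto

lemma conn_single: "induced_connected E {x}"
  unfolding induced_connected_def by auto

lemma conn_empty: "induced_connected E {}"
  unfolding induced_connected_def by auto

lemma rt_mono: "A \<subseteq> B \<Longrightarrow> (x, y) \<in> (Restr {(a, b). E a b} A)\<^sup>* \<Longrightarrow> (x, y) \<in> (Restr {(a, b). E a b} B)\<^sup>*"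
  by (rule rtrancl_mono[THEN subsetD, rotated]) auto

lemma conn_union:
  assumes A: "induced_connected E A" and B: "induced_connected E B"
    and ab: "a \<in> A" "b \<in> B" "E a b"
  shows "induced_connected E (A \<union> B)"
  unfolding induced_connected_def
proof (intro ballI)
  let ?R = "Restr {(a, b). E a b} (A \<union> B)"
  have iA: "(x, y) \<in> ?R\<^sup>*" if "x \<in> A" "y \<in> A" for x y
    using A that unfolding induced_connected_def by (auto intro: rt_mono[of A])
  have iB: "(x, y) \<in> ?R\<^sup>*" if "x \<in> B" "y \<in> B" for x y
    using B that unfolding induced_connected_def by (auto intro: rt_mono[of B])
  have e1: "(a, b) \<in> ?R\<^sup>*" using ab by auto
  have e2: "(b, a) \<in> ?R\<^sup>*" using ab Esym by auto
  fix x y assume "x \<in> A \<union> B" "y \<in> A \<union> B"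
  then show "(x, y) \<in> ?R\<^sup>*"
  proof (elim UnE)
    assume "x \<in> A" "y \<in> A" then show ?thesis using iA by auto
  next
    assume "x \<in> B" "y \<in> B" then show ?thesis using iB by auto
  next
    assume "x \<in> A" "y \<in> B" then show ?thesis
      using iA[of x a] iB[of b y] e1 ab by (meson rtrancl_trans)
  next
    assume "x \<in> B" "y \<in> A" then show ?thesis
      using iB[of x b] iA[of a y] e2 ab by (meson rtrancl_trans)
  qed
qed

lemma arc_conn: "x \<in> V \<Longrightarrow> induced_connected E (arc x m)"
proof (induction m)
  case 0 then show ?case by (simp add: arc_def conn_empty)
next
  case (Suc m)
  show ?case
  proof (cases m)
    case 0
    have "arc x (Suc 0) = {x}" unfolding arc_def by auto
    then show ?thesis using 0 conn_single by simp
  next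
    case (Suc m')
    have "E ((nx^^m') x) (nx ((nx^^m') x))" using edge nxpow_in Suc.prems by blast
    then have "E ((nx^^m') x) ((nx^^m) x)" using Suc by simp
    moreover have "(nx^^m') x \<in> arc x m" using Suc arc_memI by auto
    ultimately have "induced_connected E (arc x m \<union> {(nx^^m) x})"
      using conn_union[OF Suc.IH[OF Suc.prems] conn_single] by blast
    then show ?thesis by (simp add: arc_Suc)
  qed
qed

lemma cross_edge:
  assumes H: "induced_connected E H" and T: "T \<subseteq> H" "t0 \<in> T" "r0 \<in> H" "r0 \<notin> T"
  shows "\<exists>t\<in>T. \<exists>r\<in>H - T. E t r"
proof -
  have p: "(t0, r0) \<in> (Restr {(a, b). E a b} H)\<^sup>*" using H T unfolding induced_connected_def by auto
  have "y \<in> T \<or> (\<exists>t\<in>T. \<exists>r\<in>H - T. E t r)" if "(t0, y) \<in> (Restr {(a, b). E a b} H)\<^sup>*" for y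
    using that
  proof (induction rule: rtrancl_induct)
    case base then show ?case using T by auto
  next
    case (step y z) then show ?case by auto
  qed
  then show ?thesis using p T by auto
qed

end

definition bal :: "'a set \<Rightarrow> nat \<Rightarrow> real \<Rightarrow> 'a set \<Rightarrow> bool" where
  "bal V k s U \<longleftrightarrow> \<bar>real (card U) - real (card V) / real k\<bar> \<le> s"

lemma bal_small:
  assumes "s \<ge> real (card V) / real k" "bal V k s W" "1 \<le> card X" "card X \<le> card W"
  shows "bal V k s X"
proof -
  have "real (card V) / real k \<ge> 0" by simp
  then show ?thesis using assms unfolding bal_def by (auto simp: abs_le_iff)
qed

lemma BCP_bal: "BCP V E k s P \<Longrightarrow> U \<in> P \<Longrightarrow> bal V k s U"
  unfolding BCP_def bal_def by auto

lemma BCP_conn: "BCP V E k s P \<Longrightarrow> U \<in> P \<Longrightarrow> induced_connected E U"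
  unfolding BCP_def by auto

lemma move_BCP:
  assumes P: "BCP V E k s P" and k: "k \<ge> 2"
    and AB: "A \<in> P" "B \<in> P" "A \<noteq> B"
    and TR: "T \<union> R = A \<union> B" "T \<inter> R = {}" "T \<noteq> {}" "R \<noteq> {}"
    and cT: "induced_connected E T" and cR: "induced_connected E R"
    and bT: "bal V k s T" and bR: "bal V k s R"
    and Q: "Q = (P - {A, B}) \<union> {T, R}"
  shows "BCP V E k s Q"
    "num_fragments V c Q + card (fragments V c A) + card (fragments V c B)
       = num_fragments V c P + card (fragments V c T) + card (fragments V c R)"
    "recomb_move V E k s P Q \<or> Q = P"
proof -
  have pp: "partition_on V P" and cP: "card P = k" using P unfolding BCP_def by auto
  have finP: "finite P" using cP k by (metis card.infinite not_numeral_le_zero)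
  have dis: "\<And>Z1 Z2. Z1 \<in> P \<Longrightarrow> Z2 \<in> P \<Longrightarrow> Z1 \<noteq> Z2 \<Longrightarrow> Z1 \<inter> Z2 = {}"
    using pp unfolding partition_on_def disjoint_def by auto
  have TnP: "T \<notin> P - {A, B}"
  proof
    assume "T \<in> P - {A, B}"
    then have "T \<inter> A = {}" "T \<inter> B = {}" using dis AB by auto
    then show False using TR by auto
  qed
  have RnP: "R \<notin> P - {A, B}"
  proof
    assume "R \<in> P - {A, B}"
    then have "R \<inter> A = {}" "R \<inter> B = {}" using dis AB by auto
    then show False using TR by auto
  qed
  have TR': "T \<noteq> R" using TR by auto
  have partQ: "partition_on V Q"
  proof -
    have "\<Union>Q = \<Union>(P - {A, B}) \<union> T \<union> R" using Q by auto
    also have "\<dots> = \<Union>(P - {A, B}) \<union> A \<union> B" using TR(1) by auto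
    also have "\<dots> = \<Union>P" using AB by auto
    also have "\<dots> = V" using pp unfolding partition_on_def by auto
    finally have u: "\<Union>Q = V" .
    have d: "disjoint Q"
    proof (rule disjointI)
      fix Z1 Z2 assume z: "Z1 \<in> Q" "Z2 \<in> Q" "Z1 \<noteq> Z2"
      have sub: "Z \<inter> X = {}" if "Z \<in> P - {A, B}" "X \<subseteq> A \<union> B" for Z X
        using dis[of Z A] dis[of Z B] that AB by auto
      have zz: "Z1 \<in> P - {A, B} \<or> Z1 = T \<or> Z1 = R" "Z2 \<in> P - {A, B} \<or> Z2 = T \<or> Z2 = R"
        using z Q by auto
      have TAB: "T \<subseteq> A \<union> B" "R \<subseteq> A \<union> B" using TR(1) by auto
      show "Z1 \<inter> Z2 = {}"
      proof (cases "Z1 \<in> P - {A, B}")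
        case True
        then show ?thesis using zz(2)
        proof (elim disjE)
          assume "Z2 \<in> P - {A, B}" then show ?thesis using dis True z(3) by blast
        next
          assume "Z2 = T" then show ?thesis using sub[OF True TAB(1)] by simp
        next
          assume "Z2 = R" then show ?thesis using sub[OF True TAB(2)] by simp
        qed
      next
        case False
        then have "Z1 = T \<or> Z1 = R" using zz by auto
        then show ?thesis using zz(2)
        proof (elim disjE)
          assume "Z1 = T" "Z2 \<in> P - {A, B}" then show ?thesis using sub[OF _ TAB(1)] by blast
        next
          assume "Z1 = R" "Z2 \<in> P - {A, B}" then show ?thesis using sub[OF _ TAB(2)] by blast
        qed (use z TR in auto)
      qed
    qed
    have "{} \<notin> Q" using Q TR pp unfolding partition_on_def by auto
    then show ?thesis using u d unfolding partition_on_def by auto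
  qed
  have cardQ: "card Q = k"
  proof -
    have "card (P - {A, B}) = k - 2" using cP AB finP by (simp add: card_Diff_subset)
    moreover have "card Q = card (P - {A, B}) + 2" using Q TnP RnP TR' finP by simp
    ultimately show ?thesis using cP k by simp
  qed
  have dQ: "\<forall>U\<in>Q. induced_connected E U \<and> \<bar>real (card U) - real (card V) / real k\<bar> \<le> s"
    using Q P cT cR bT bR unfolding BCP_def bal_def by auto
  show "BCP V E k s Q" unfolding BCP_def using partQ cardQ dQ by auto
  let ?f = "\<lambda>U. card (fragments V c U)"
  have s1: "sum ?f P = sum ?f (P - {A, B}) + ?f A + ?f B"
  proof -
    have "sum ?f P = sum ?f (P - {A, B}) + sum ?f {A, B}"
      using finP AB by (metis add.commute empty_subsetI insert_subset sum.subset_diff)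
    then show ?thesis using AB by simp
  qed
  have s2: "sum ?f Q = sum ?f (P - {A, B}) + ?f T + ?f R"
    using Q TnP RnP TR' finP by simp
  show "num_fragments V c Q + ?f A + ?f B = num_fragments V c P + ?f T + ?f R"
    unfolding num_fragments_def using s1 s2 by simp
  show "recomb_move V E k s P Q \<or> Q = P"
    unfolding recomb_move_def using AB TR Q \<open>BCP V E k s Q\<close> by blast
qed

context hc begin

lemma arc_one: "arc x (Suc 0) = {x}" unfolding arc_def by auto

lemma frag_single: "x \<in> V \<Longrightarrow> card (fragments V c {x}) = 1"
  using card_frag_contig arc_contig[of x 1] n3 arc_one by auto

lemma S_ne: assumes "U \<subseteq> V" "U \<noteq> {}" "U \<noteq> V" shows "U - nx ` U \<noteq> {}"
proof
  assume a: "U - nx ` U = {}"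
  have finU: "finite U" using assms(1) finV finite_subset by auto
  have "inj_on nx U" using nx_inj assms(1) by (auto intro!: inj_onI)
  then have "card (nx ` U) = card U" by (simp add: card_image)
  moreover have "U \<subseteq> nx ` U" using a by auto
  moreover have "finite (nx ` U)" using finU by auto
  ultimately have eq: "U = nx ` U" by (simp add: card_subset_eq)
  obtain x where x: "x \<in> U" using assms by auto
  have "(nx^^j) x \<in> U" for j
  proof (induction j)
    case 0 then show ?case using x by simp
  next
    case (Suc j) then show ?case using eq by (metis funpow.simps(2) comp_apply image_eqI)
  qed
  moreover obtain y where y: "y \<in> V" "y \<notin> U" using assms by auto
  moreover obtain j where "(nx^^j) x = y" using surj_pos[of x y] x y assms(1) by auto
  ultimately show False by auto
qed

definition cl :: "'a set \<Rightarrow> 'a set \<Rightarrow> bool" where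
  "cl H T \<longleftrightarrow> (\<forall>x\<in>H. nx x \<in> H \<longrightarrow> (x \<in> T \<longleftrightarrow> nx x \<in> T))"

lemma arc_cl:
  assumes H: "H \<subseteq> V" "H \<noteq> V" and a: "a \<in> H" "a \<notin> nx ` H"
  shows "cl H (arc a (len H a))"
  unfolding cl_def
proof (intro ballI impI)
  fix x assume x: "x \<in> H" "nx x \<in> H"
  have aV: "a \<in> V" using a H by auto
  note lp = len_props[OF H aV]
  show "x \<in> arc a (len H a) \<longleftrightarrow> nx x \<in> arc a (len H a)"
  proof
    assume "x \<in> arc a (len H a)"
    then obtain i where i: "i < len H a" "x = (nx^^i) a" using arc_mem by auto
    have e: "(nx^^(Suc i)) a = nx x" using i by simp
    have "Suc i \<noteq> len H a"
    proof
      assume "Suc i = len H a"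
      with e lp(2) x show False by metis
    qed
    then have "Suc i < len H a" using i by simp
    then show "nx x \<in> arc a (len H a)" using i arc_memI[of "Suc i"] by auto
  next
    assume "nx x \<in> arc a (len H a)"
    then obtain i where i: "i < len H a" "nx x = (nx^^i) a" using arc_mem by auto
    show "x \<in> arc a (len H a)"
    proof (cases i)
      case 0 then show ?thesis using i x a by auto
    next
      case (Suc i')
      then have "nx x = nx ((nx^^i') a)" using i by simp
      then have "x = (nx^^i') a" using nx_inj x H aV nxpow_in by blast
      then show ?thesis using arc_memI[of i'] i Suc by auto
    qed
  qed
qed

lemma cl_S: assumes "cl H T" "T \<subseteq> H" "H \<subseteq> V" shows "T - nx ` T = T - nx ` H"
proof
  show "T - nx ` H \<subseteq> T - nx ` T" using assms(2) by auto
  show "T - nx ` T \<subseteq> T - nx ` H"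
  proof
    fix a assume a: "a \<in> T - nx ` T"
    have "a \<notin> nx ` H"
    proof
      assume "a \<in> nx ` H"
      then obtain y where y: "y \<in> H" "a = nx y" by auto
      then have "y \<in> T" using assms(1,2) a unfolding cl_def by auto
      then show False using a y by auto
    qed
    then show "a \<in> T - nx ` H" using a by auto
  qed
qed

lemma cl_compl: "cl H T \<Longrightarrow> cl H (H - T)" unfolding cl_def by auto

lemma cl_Un: "cl H T \<Longrightarrow> cl H C \<Longrightarrow> cl H (T \<union> C)" unfolding cl_def by auto

lemma split_exists:
  assumes H: "H \<subseteq> V" "H \<noteq> V" "H \<noteq> {}" and cH: "induced_connected E H"
    and nc: "\<not> contiguous n c H"
  shows "\<exists>T. T \<subseteq> H \<and> T \<noteq> {} \<and> T \<noteq> H \<and> cl H T \<and> induced_connected E T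
             \<and> induced_connected E (H - T)"
proof -
  let ?F = "{T. T \<subseteq> H \<and> T \<noteq> {} \<and> T \<noteq> H \<and> cl H T \<and> induced_connected E T}"
  have finH: "finite H" using H finV finite_subset by auto
  obtain a where a: "a \<in> H" "a \<notin> nx ` H" using S_ne[OF H(1,3,2)] by auto
  have aV: "a \<in> V" using a H by auto
  let ?T0 = "arc a (len H a)"
  note lp = len_props[OF H(1,2) aV]
  have T0: "?T0 \<in> ?F"
  proof -
    have "?T0 \<subseteq> H" using lp(3) unfolding arc_def by auto
    moreover have "?T0 \<noteq> {}" using arc_self len_pos[OF H(1,2) a(1)] by auto
    moreover have "contiguous n c ?T0" using arc_contig aV len_pos[OF H(1,2) a(1)] lp(1) by auto
    then have "?T0 \<noteq> H" using nc by auto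
    ultimately show ?thesis using arc_cl[OF H(1,2) a] arc_conn aV by auto
  qed
  have finF: "finite ?F" using finH by (auto intro: finite_subset[of _ "Pow H"])
  define M where "M = Max (card ` ?F)"
  have "M \<in> card ` ?F" unfolding M_def using finF T0 by (intro Max_in) auto
  then obtain T where T: "T \<in> ?F" "card T = M" by auto
  have Tmax: "card T' \<le> card T" if "T' \<in> ?F" for T'
    using that T finF unfolding M_def by auto
  have TH: "T \<subseteq> H" "T \<noteq> {}" "T \<noteq> H" "cl H T" "induced_connected E T" using T by auto
  obtain t0 where t0: "t0 \<in> T" using TH by auto
  obtain r0 where r0: "r0 \<in> H" "r0 \<notin> T" using TH by auto
  obtain t r where tr: "t \<in> T" "r \<in> H - T" "E t r" using cross_edge[OF cH TH(1) t0 r0] by auto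
  let ?CY = "{(x, y). y = nx x \<or> x = nx y}"
  let ?RC = "Restr ?CY H"
  define C where "C = {y. (r, y) \<in> ?RC\<^sup>*}"
  have rC: "r \<in> C" unfolding C_def by auto
  have CH: "C \<subseteq> H"
  proof
    fix y assume "y \<in> C"
    then have "(r, y) \<in> ?RC\<^sup>*" unfolding C_def by auto
    then show "y \<in> H" using tr by (induction rule: rtrancl_induct) auto
  qed
  have clR: "cl H (H - T)" using cl_compl TH(4) .
  have CR: "C \<subseteq> H - T"
  proof
    fix y assume "y \<in> C"
    then have "(r, y) \<in> ?RC\<^sup>*" unfolding C_def by auto
    then show "y \<in> H - T"
    proof (induction rule: rtrancl_induct)
      case base then show ?case using tr by auto
    next
      case (step y z)
      then have yz: "y \<in> H" "z \<in> H" "z = nx y \<or> y = nx z" by auto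
      then show ?case using step.IH clR unfolding cl_def by auto
    qed
  qed
  have clC: "cl H C" unfolding cl_def
  proof (intro ballI impI)
    fix x assume x: "x \<in> H" "nx x \<in> H"
    show "x \<in> C \<longleftrightarrow> nx x \<in> C"
    proof
      assume "x \<in> C"
      then have "(r, x) \<in> ?RC\<^sup>*" unfolding C_def by auto
      moreover have "(x, nx x) \<in> ?RC" using x by auto
      ultimately have "(r, nx x) \<in> ?RC\<^sup>*" by (rule rtrancl_into_rtrancl)
      then show "nx x \<in> C" unfolding C_def by simp
    next
      assume "nx x \<in> C"
      then have "(r, nx x) \<in> ?RC\<^sup>*" unfolding C_def by auto
      moreover have "(nx x, x) \<in> ?RC" using x by auto
      ultimately have "(r, x) \<in> ?RC\<^sup>*" by (rule rtrancl_into_rtrancl)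
      then show "x \<in> C" unfolding C_def by simp
    qed
  qed
  let ?RE = "Restr {(a, b). E a b} C"
  have symRE: "sym ?RE" using Esym by (auto intro!: symI)
  have rpath: "(r, y) \<in> ?RE\<^sup>*" if "y \<in> C" for y
  proof -
    have "(r, y) \<in> ?RC\<^sup>*" using that unfolding C_def by auto
    then show ?thesis
    proof (induction rule: rtrancl_induct)
      case base then show ?case by simp
    next
      case (step y z)
      then have yz: "y \<in> H" "z \<in> H" "z = nx y \<or> y = nx z" by auto
      have rz: "(r, z) \<in> ?RC\<^sup>*" using step.hyps(1) step.hyps(2) by (rule rtrancl_into_rtrancl)
      have "y \<in> C" "z \<in> C" using step.hyps(1) rz unfolding C_def by auto
      moreover have "E y z" using yz edge H by auto
      ultimately have "(y, z) \<in> ?RE" by auto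
      with step.IH show ?case by (rule rtrancl_into_rtrancl)
    qed
  qed
  have cC: "induced_connected E C" unfolding induced_connected_def
  proof (intro ballI)
    fix x y assume "x \<in> C" "y \<in> C"
    then have "(r, x) \<in> ?RE\<^sup>*" "(r, y) \<in> ?RE\<^sup>*" using rpath by auto
    moreover have "(x, r) \<in> ?RE\<^sup>*" using calculation(1) sym_rtrancl[OF symRE] unfolding sym_def by blast
    ultimately show "(x, y) \<in> ?RE\<^sup>*" by (meson rtrancl_trans)
  qed
  have TC: "T \<union> C = H"
  proof (rule ccontr)
    assume ne: "T \<union> C \<noteq> H"
    have "induced_connected E (T \<union> C)" using conn_union[OF TH(5) cC tr(1) rC tr(3)] .
    moreover have "cl H (T \<union> C)" using cl_Un TH(4) clC by auto
    ultimately have "T \<union> C \<in> ?F" using ne TH CH by auto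
    then have "card (T \<union> C) \<le> card T" using Tmax by auto
    moreover have "card T < card (T \<union> C)"
      using finH CH TH(1) rC tr(2) by (intro psubset_card_mono) (auto intro: finite_subset)
    ultimately show False by simp
  qed
  then have "H - T = C" using CR by auto
  then show ?thesis using TH cC by auto
qed

end

lemma P_facts:
  assumes "BCP V E k s P"
  shows "\<Union>P = V" "\<And>Z. Z \<in> P \<Longrightarrow> Z \<noteq> {}"
    "\<And>Z1 Z2 x. Z1 \<in> P \<Longrightarrow> Z2 \<in> P \<Longrightarrow> x \<in> Z1 \<Longrightarrow> x \<in> Z2 \<Longrightarrow> Z1 = Z2"
  using assms unfolding BCP_def partition_on_def disjoint_def by auto

context hc begin

lemma nx_swap: "(nx^^i) (nx x) = (nx^^(Suc i)) x"
  by (simp add: funpow_swap1)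

lemma notin_tail: assumes "x \<in> V" "m < n" shows "x \<notin> arc (nx x) m"
proof
  assume "x \<in> arc (nx x) m"
  then obtain j where j: "j < m" "x = (nx^^j) (nx x)" using arc_mem by auto
  then have e: "(nx^^0) x = (nx^^(Suc j)) x" using nx_swap by simp
  have "0 = Suc j" by (rule pos_inj[OF assms(1)]) (use j assms(2) e in auto)
  then show False by simp
qed

lemma final_move:
  assumes P: "BCP V E k s P" and k: "k \<ge> 2" and s: "s \<ge> real n / real k"
    and u: "{u} \<in> P" and W: "W \<in> P" "nx u \<in> W" "\<not> contiguous n c W"
  shows "\<exists>Q. recomb_move V E k s P Q \<and> num_fragments V c Q < num_fragments V c P"
proof -
  note pf = P_facts[OF P]
  have uV: "u \<in> V" using pf(1) u by auto
  have WV: "W \<subseteq> V" using pf(1) W by auto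
  have ctgu: "contiguous n c {u}" using arc_contig[of u 1] uV n3 arc_one by auto
  have Wu: "{u} \<noteq> W" using W ctgu by auto
  have uW: "u \<notin> W" using pf(3)[OF u W(1), of u] Wu by auto
  define H where "H = insert u W"
  have HV: "H \<subseteq> V" using uV WV H_def by auto
  have cH: "induced_connected E H"
    using conn_union[OF conn_single BCP_conn[OF P W(1)], of u u "nx u"] edge(1)[OF uV] W(2)
    unfolding H_def by auto
  have finW: "finite W" using WV finV finite_subset by auto
  have cardH: "card H = card W + 1" unfolding H_def using finW uW by simp
  have HnV: "H \<noteq> V"
  proof
    assume HV': "H = V"
    have nn: "n = Suc (n - 1)" using n3 by simp
    have a: "arc u n = insert u (arc (nx u) (n - 1))" using arc_Suc'[of u "n - 1"] nn by simp
    have b: "u \<notin> arc (nx u) (n - 1)" using notin_tail uV n3 by simp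
    have "W = arc (nx u) (n - 1)" using a b arc_full[OF uV] HV' uW unfolding H_def by auto
    moreover have "contiguous n c (arc (nx u) (n - 1))" using arc_contig nx_in[OF uV] n3 by auto
    ultimately show False using W(3) by simp
  qed
  have WnV: "W \<noteq> V" using uW uV by auto
  have fW: "card (fragments V c W) = card (W - nx ` W)" using frag_S[OF WV WnV] .
  have nxuS: "nx u \<in> W - nx ` W"
  proof -
    have "nx u \<notin> nx ` W"
    proof
      assume "nx u \<in> nx ` W"
      then obtain y where "y \<in> W" "nx u = nx y" by auto
      then have "u = y" using nx_inj uV WV by auto
      then show False using uW \<open>y \<in> W\<close> by simp
    qed
    then show ?thesis using W(2) by auto
  qed
  have finSW: "finite (W - nx ` W)" using finW by auto
  have fu: "card (fragments V c {u}) = 1" using frag_single uV .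
  have HuW: "H = {u} \<union> W" unfolding H_def by auto
  have finH: "finite H" using finW H_def by auto
  show ?thesis
  proof (cases "contiguous n c H")
    case False
    have Hne: "H \<noteq> {}" unfolding H_def by auto
    obtain T where T: "T \<subseteq> H" "T \<noteq> {}" "T \<noteq> H" "cl H T" "induced_connected E T"
      "induced_connected E (H - T)"
      using split_exists[OF HV HnV Hne cH False] by blast
    define R where "R = H - T"
    have TR: "T \<union> R = {u} \<union> W" "T \<inter> R = {}" "R \<noteq> {}" using T HuW R_def by auto
    have finT: "finite T" using finH T(1) finite_subset by auto
    have cRe: "card R = card H - card T" unfolding R_def using T(1) finT by (simp add: card_Diff_subset)
    have cTH: "card T \<le> card H" using T(1) finH by (simp add: card_mono)
    have cTR: "card T + card R = card W + 1" using cRe cTH cardH by simp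
    have cT1: "1 \<le> card T" using T(2) finT by (simp add: Suc_leI card_gt_0_iff)
    have finR: "finite R" using finH R_def by simp
    have cR1: "1 \<le> card R" using TR(3) finR by (simp add: Suc_leI card_gt_0_iff)
    have bW: "bal V k s W" using BCP_bal[OF P W(1)] .
    have bT: "bal V k s T" using bal_small[OF s bW cT1] cTR cR1 by simp
    have bR: "bal V k s R" using bal_small[OF s bW cR1] cTR cT1 by simp
    define Q where "Q = (P - {{u}, W}) \<union> {T, R}"
    note mv = move_BCP[OF P k u W(1) Wu TR(1,2) T(2) TR(3) T(5) T(6)[folded R_def] bT bR Q_def]
    have TV: "T \<subseteq> V" "T \<noteq> V" using T(1) HV HnV by auto
    have RV: "R \<subseteq> V" "R \<noteq> V" using R_def HV HnV by auto
    have fT: "card (fragments V c T) = card (T - nx ` H)"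
      using frag_S[OF TV] cl_S[OF T(4) T(1) HV] by simp
    have clR: "cl H R" using cl_compl[OF T(4)] R_def by simp
    have fR: "card (fragments V c R) = card (R - nx ` H)"
      using frag_S[OF RV] cl_S[OF clR _ HV] R_def by auto
    have sp: "card (T - nx ` H) + card (R - nx ` H) = card (H - nx ` H)"
    proof -
      have "(T - nx ` H) \<union> (R - nx ` H) = H - nx ` H" using R_def T(1) by auto
      moreover have "(T - nx ` H) \<inter> (R - nx ` H) = {}" using TR(2) by auto
      moreover have "finite (T - nx ` H)" "finite (R - nx ` H)"
        using finH T(1) R_def by (auto intro: finite_subset)
      ultimately show ?thesis using card_Un_disjoint[of "T - nx ` H" "R - nx ` H"] by simp
    qed
    have le: "card (H - nx ` H) \<le> card (W - nx ` W)"
    proof -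
      have "H - nx ` H \<subseteq> insert u ((W - nx ` W) - {nx u})"
      proof
        fix a assume a: "a \<in> H - nx ` H"
        have "nx u \<in> nx ` H" unfolding H_def by auto
        then show "a \<in> insert u ((W - nx ` W) - {nx u})" using a unfolding H_def by auto
      qed
      then have "card (H - nx ` H) \<le> card (insert u ((W - nx ` W) - {nx u}))"
        using finSW by (intro card_mono) auto
      also have "\<dots> \<le> Suc (card ((W - nx ` W) - {nx u}))" by (simp add: card_insert_le_m1)
      also have "\<dots> = card (W - nx ` W)"
      proof -
        have "card (W - nx ` W) > 0" using nxuS finSW card_gt_0_iff by blast
        then show ?thesis using nxuS finSW by (simp add: card_Diff_singleton)
      qed
      finally show ?thesis .
    qed
    have lt: "num_fragments V c Q < num_fragments V c P" using mv(2)[of c] fu fW fT fR sp le by simp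
    then have "recomb_move V E k s P Q" using mv(3) by auto
    then show ?thesis using lt by auto
  next
    case True
    obtain a L where aL: "a \<in> V" "1 \<le> L" "L \<le> n" "H = arc a L" using True contig_iff by auto
    have "L \<noteq> n" using arc_full aL HnV by auto
    then have Ln: "L < n" using aL by simp
    have cardHL: "card H = L" using card_arc aL by simp
    have "u \<in> H" unfolding H_def by simp
    then obtain i where i: "i < L" "u = (nx^^i) a" using aL arc_mem by auto
    have "nx u \<in> H" unfolding H_def using W(2) by simp
    then obtain i' where i': "i' < L" "nx u = (nx^^i') a" using aL arc_mem by auto
    have "nx u = (nx^^(Suc i)) a" using i by simp
    then have "i' = Suc i" using pos_inj[OF aL(1), of i' "Suc i"] i' i Ln by simp
    then have SiL: "Suc i < L" using i' by simp
    have i0: "i \<noteq> 0"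
    proof
      assume "i = 0"
      then have ua: "u = a" using i by simp
      have LL: "L = Suc (L - 1)" using aL by simp
      have "arc a L = insert a (arc (nx a) (L - 1))" using arc_Suc'[of a "L - 1"] LL by simp
      moreover have "a \<notin> arc (nx a) (L - 1)" using notin_tail aL Ln by simp
      ultimately have "W = arc (nx a) (L - 1)" using aL(4) ua uW unfolding H_def by auto
      moreover have "contiguous n c (arc (nx a) (L - 1))"
        using arc_contig nx_in[OF aL(1)] SiL \<open>i = 0\<close> Ln by auto
      ultimately show False using W(3) by simp
    qed
    define T where "T = arc a i"
    define R where "R = arc u (L - i)"
    have TRu: "T \<union> R = H" unfolding T_def R_def aL(4) i(2)
      using arc_add[of a i "L - i"] i by simp
    have TRi: "T \<inter> R = {}"
    proof (rule ccontr)
      assume "T \<inter> R \<noteq> {}"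
      then obtain x where x: "x \<in> T" "x \<in> R" by auto
      obtain j where j: "j < i" "x = (nx^^j) a" using x(1) T_def arc_mem by auto
      obtain j' where j': "j' < L - i" "x = (nx^^j') u" using x(2) R_def arc_mem by auto
      have "x = (nx^^(j' + i)) a" using j' i by (simp add: funpow_add)
      moreover have "j' + i < n" using j' i Ln by linarith
      moreover have "j < n" using j i Ln by linarith
      ultimately have "j = j' + i" using pos_inj[OF aL(1), of j "j' + i"] j by simp
      then show False using j by simp
    qed
    have uV': "(nx^^i) a \<in> V" using nxpow_in aL by simp
    have cT: "card T = i" unfolding T_def using card_arc aL i Ln by simp
    have cR: "card R = L - i" unfolding R_def using card_arc uV i Ln by simp
    have cW: "card W = L - 1" using cardH cardHL by simp
    have bW: "bal V k s W" using BCP_bal[OF P W(1)] .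
    have bT: "bal V k s T" using bal_small[OF s bW] cT cW i0 i by simp
    have bR: "bal V k s R" using bal_small[OF s bW] cR cW i0 i by simp
    have TR: "T \<union> R = {u} \<union> W" "T \<noteq> {}" "R \<noteq> {}" using TRu HuW cT cR i0 i by auto
    have conT: "induced_connected E T" unfolding T_def using arc_conn aL by simp
    have conR: "induced_connected E R" unfolding R_def using arc_conn uV by simp
    define Q where "Q = (P - {{u}, W}) \<union> {T, R}"
    note mv = move_BCP[OF P k u W(1) Wu TR(1) TRi TR(2,3) conT conR bT bR Q_def]
    have fT: "card (fragments V c T) = 1" unfolding T_def
      using card_frag_contig arc_contig aL i0 i Ln by simp
    have fR: "card (fragments V c R) = 1" unfolding R_def
      using card_frag_contig arc_contig uV i Ln by simp
    have aW: "a \<in> W"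
    proof -
      have "a \<in> H" using aL arc_self by simp
      moreover have "a \<noteq> u" using pos_inj[OF aL(1), of 0 i] i i0 Ln by auto
      ultimately show ?thesis unfolding H_def by auto
    qed
    have anx: "a \<notin> nx ` W"
    proof
      assume "a \<in> nx ` W"
      then obtain y where y: "y \<in> W" "a = nx y" by auto
      then have "y \<in> H" unfolding H_def by simp
      then obtain j where j: "j < L" "y = (nx^^j) a" using aL arc_mem by auto
      then have e: "(nx^^0) a = (nx^^(Suc j)) a" using y by simp
      have "0 = Suc j" by (rule pos_inj[OF aL(1)]) (use j Ln e in auto)
      then show False by simp
    qed
    have anu: "a \<noteq> nx u"
    proof
      assume "a = nx u"
      then have e: "(nx^^0) a = (nx^^(Suc i)) a" using i by simp
      have "0 = Suc i" by (rule pos_inj[OF aL(1)]) (use SiL Ln e in auto)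
      then show False by simp
    qed
    have "{a, nx u} \<subseteq> W - nx ` W" using aW anx nxuS by auto
    then have "card {a, nx u} \<le> card (W - nx ` W)" using finSW by (intro card_mono) auto
    then have "2 \<le> card (W - nx ` W)" using anu by simp
    then have lt: "num_fragments V c Q < num_fragments V c P" using mv(2)[of c] fu fW fT fR by simp
    then have "recomb_move V E k s P Q" using mv(3) by auto
    then show ?thesis using lt by auto
  qed
qed

end

lemma chain_Cons:
  assumes "ps' \<noteq> []" "R P (hd ps')" "\<forall>i < length ps' - 1. R (ps' ! i) (ps' ! Suc i)"
  shows "\<forall>i < length (P # ps') - 1. R ((P # ps') ! i) ((P # ps') ! Suc i)"
proof (intro allI impI)
  fix i assume i: "i < length (P # ps') - 1"
  show "R ((P # ps') ! i) ((P # ps') ! Suc i)"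
  proof (cases i)
    case 0 then show ?thesis using assms(1,2) by (simp add: hd_conv_nth)
  next
    case (Suc i') then show ?thesis using assms(3) i by auto
  qed
qed

context hc begin

lemma jump:
  assumes P: "BCP V E k s P" and k: "k \<ge> 2" and s: "s \<ge> real n / real k"
    and u: "{u} \<in> P" and W: "W \<in> P" "nx u \<in> W" "contiguous n c W" "2 \<le> card W"
  shows "card W < n \<and> W = arc (nx u) (card W) \<and>
    recomb_move V E k s P ((P - {{u}, W}) \<union> {{(nx^^(card W)) u}, arc u (card W)}) \<and>
    BCP V E k s ((P - {{u}, W}) \<union> {{(nx^^(card W)) u}, arc u (card W)}) \<and>
    num_fragments V c ((P - {{u}, W}) \<union> {{(nx^^(card W)) u}, arc u (card W)}) = num_fragments V c P"
proof -
  define m where "m = card W"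
  define e where "e = (nx^^m) u"
  note pf = P_facts[OF P]
  have uV: "u \<in> V" using pf(1) u by auto
  have WV: "W \<subseteq> V" using pf(1) W by auto
  have finW: "finite W" using WV finV finite_subset by auto
  have Wu: "{u} \<noteq> W" using W(4) by auto
  have uW: "u \<notin> W" using pf(3)[OF u W(1), of u] Wu by auto
  have "W \<subseteq> V - {u}" using WV uW by auto
  then have "m \<le> card (V - {u})" unfolding m_def using finV by (intro card_mono) auto
  then have mn: "m < n" using uV finV n3 by (simp add: card_Diff_singleton)
  obtain b m' where bm: "b \<in> V" "1 \<le> m'" "m' \<le> n" "W = arc b m'" using W(3) contig_iff by auto
  have "m' = m" unfolding m_def using bm card_arc by simp
  obtain i where i: "i < m" "nx u = (nx^^i) b" using W(2) bm \<open>m' = m\<close> arc_mem by auto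
  have "i = 0"
  proof (rule ccontr)
    assume "i \<noteq> 0"
    then obtain i' where i': "i = Suc i'" by (cases i) auto
    then have "nx u = nx ((nx^^i') b)" using i by simp
    then have "u = (nx^^i') b" using nx_inj uV nxpow_in bm by blast
    moreover have "(nx^^i') b \<in> W" using bm \<open>m' = m\<close> i i' arc_memI[of i' m] by simp
    ultimately show False using uW by simp
  qed
  then have Warc: "W = arc (nx u) m" using bm \<open>m' = m\<close> i by simp
  have m2: "2 \<le> m" using W(4) m_def by simp
  define T where "T = {e}"
  define R where "R = arc u m"
  have TR: "T \<union> R = {u} \<union> W"
  proof -
    have "T \<union> R = arc u (Suc m)" unfolding T_def R_def e_def arc_Suc by auto
    also have "\<dots> = {u} \<union> W" unfolding arc_Suc' Warc by auto
    finally show ?thesis .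
  qed
  have eR: "e \<notin> R"
  proof
    assume "e \<in> R"
    then obtain t where t: "t < m" "e = (nx^^t) u" using R_def arc_mem by auto
    have "m = t" by (rule pos_inj[OF uV]) (use t mn e_def in auto)
    then show False using t by simp
  qed
  have TRi: "T \<inter> R = {}" using eR T_def by auto
  have eV: "e \<in> V" using e_def nxpow_in uV by simp
  have bW: "bal V k s W" using BCP_bal[OF P W(1)] .
  have cR: "card R = m" unfolding R_def using card_arc uV mn by simp
  have bT: "bal V k s T" using bal_small[OF s bW] T_def m2 m_def by simp
  have bR: "bal V k s R" using bal_small[OF s bW] cR m2 m_def by simp
  define Q where "Q = (P - {{u}, W}) \<union> {T, R}"
  have Rne: "R \<noteq> {}" using cR m2 by auto
  have conR: "induced_connected E R" unfolding R_def using arc_conn uV by simp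
  have Tne: "T \<noteq> {}" using T_def by simp
  note mv = move_BCP[OF P k u W(1) Wu TR TRi Tne Rne conn_single[of e, folded T_def] conR bT bR Q_def]
  have ctR: "contiguous n c R" unfolding R_def using arc_contig uV m2 mn by simp
  have eq: "num_fragments V c Q = num_fragments V c P"
    using mv(2)[of c] T_def frag_single[OF eV] frag_single[OF uV]
      card_frag_contig[OF W(3)] card_frag_contig[OF ctR] by simp
  have QP: "Q \<noteq> P"
  proof
    assume "Q = P"
    then have "{u} \<in> Q" using u by simp
    then have "{u} = T \<or> {u} = R" unfolding Q_def by auto
    then show False
    proof
      assume "{u} = T"
      then have "u = e" using T_def by simp
      then have "0 = m" using pos_inj[OF uV, of 0 m] mn e_def by simp
      then show False using m2 by simp
    next
      assume h: "{u} = R"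
      have "card R = card {u}" using h by simp
      then show False using cR m2 by simp
    qed
  qed
  have "recomb_move V E k s P Q" using mv(3) QP by auto
  moreover have "Q = (P - {{u}, W}) \<union> {{(nx^^(card W)) u}, arc u (card W)}"
    unfolding Q_def T_def R_def e_def m_def by simp
  ultimately show ?thesis using mv(1) eq Warc mn unfolding m_def by simp
qed

definition Aset :: "nat \<Rightarrow> 'a set set \<Rightarrow> 'a \<Rightarrow> nat \<Rightarrow> 'a set set" where
  "Aset k P u J = {Z \<in> P. 2 \<le> card Z \<and> (\<exists>j. 1 \<le> j \<and> j < J \<and> (nx^^j) u \<in> Z)}"

end

context hc begin

lemma walk:
  assumes k: "k \<ge> 2" and s: "s \<ge> real n / real k"
  shows "BCP V E k s P \<Longrightarrow> {u} \<in> P \<Longrightarrow> 1 \<le> J \<Longrightarrow> J < n \<Longrightarrow>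
     (\<forall>j. 1 \<le> j \<longrightarrow> j < J \<longrightarrow> (\<forall>Z\<in>P. (nx^^j) u \<in> Z \<longrightarrow> contiguous n c Z)) \<Longrightarrow>
     (\<exists>Z\<in>P. (nx^^J) u \<in> Z \<and> \<not> contiguous n c Z) \<Longrightarrow>
     \<exists>ps. ps \<noteq> [] \<and> hd ps = P \<and> length ps - 1 \<le> card (Aset k P u J) + 1 \<and>
       (\<forall>i < length ps - 1. recomb_move V E k s (ps ! i) (ps ! Suc i)) \<and>
       num_fragments V c (last ps) < num_fragments V c P"
proof (induction J arbitrary: P u rule: less_induct)
  case (less J P u)
  note P = less.prems(1) and u = less.prems(2) and J1 = less.prems(3) and Jn = less.prems(4)
    and hyp = less.prems(5) and ex = less.prems(6)
  note pf = P_facts[OF P]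
  have uV: "u \<in> V" using pf(1) u by auto
  have nuV: "nx u \<in> V" using nx_in uV by simp
  obtain W where W: "W \<in> P" "nx u \<in> W" using pf(1) nuV by auto
  obtain Z where Z: "Z \<in> P" "(nx^^J) u \<in> Z" "\<not> contiguous n c Z" using ex by auto
  have finP: "finite P" using P k unfolding BCP_def by (metis card.infinite not_numeral_le_zero)
  have finA: "finite (Aset k P u J)" unfolding Aset_def using finP by simp
  show ?case
  proof (cases "J = 1")
    case True
    then have "Z = W" using pf(3)[OF Z(1) W(1), of "nx u"] Z(2) W(2) by simp
    then obtain Q where Q: "recomb_move V E k s P Q" "num_fragments V c Q < num_fragments V c P"
      using final_move[OF P k s u W(1) W(2)] Z(3) by auto
    show ?thesis
      by (rule exI[of _ "[P, Q]"]) (use Q in auto)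
  next
    case False
    then have J2: "J \<ge> 2" using J1 by simp
    have "(nx^^1) u \<in> W" using W(2) by simp
    then have Wc: "contiguous n c W" using hyp[rule_format, of 1 W] J2 W(1) by simp
    have WV: "W \<subseteq> V" using pf(1) W by auto
    have finW: "finite W" using WV finV finite_subset by auto
    have Wne: "W \<noteq> {}" using W by auto
    show ?thesis
    proof (cases "card W \<ge> 2")
      case False
      moreover have "card W > 0" using Wne finW by (simp add: card_gt_0_iff)
      ultimately have "card W = 1" by simp
      then have Wx: "W = {nx u}" using W(2) by (metis card_1_singletonE singletonD)
      have u': "{nx u} \<in> P" using W Wx by simp
      have IH: "\<exists>ps. ps \<noteq> [] \<and> hd ps = P \<and> length ps - 1 \<le> card (Aset k P (nx u) (J - 1)) + 1 \<and>
       (\<forall>i < length ps - 1. recomb_move V E k s (ps ! i) (ps ! Suc i)) \<and>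
       num_fragments V c (last ps) < num_fragments V c P"
      proof (rule less.IH[OF _ P u'])
        show "J - 1 < J" using J1 by simp
        show "1 \<le> J - 1" using J2 by simp
        show "J - 1 < n" using Jn by simp
        show "\<forall>j. 1 \<le> j \<longrightarrow> j < J - 1 \<longrightarrow> (\<forall>Z\<in>P. (nx^^j) (nx u) \<in> Z \<longrightarrow> contiguous n c Z)"
        proof (intro allI impI ballI)
          fix j Z' assume j: "1 \<le> j" "j < J - 1" and Z': "Z' \<in> P" "(nx^^j) (nx u) \<in> Z'"
          then have "(nx^^(Suc j)) u \<in> Z'" using nx_swap by metis
          then show "contiguous n c Z'" using hyp[rule_format, of "Suc j" Z'] j Z'(1) by simp
        qed
        have "(nx^^(J - 1)) (nx u) = (nx^^J) u" using nx_swap J1 by (metis Suc_diff_1 less_le_trans zero_less_one)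
        then show "\<exists>Z\<in>P. (nx^^(J - 1)) (nx u) \<in> Z \<and> \<not> contiguous n c Z" using Z by auto
      qed
      have "Aset k P (nx u) (J - 1) \<subseteq> Aset k P u J"
        unfolding Aset_def
      proof (clarify)
        fix Z' j assume "Z' \<in> P" "2 \<le> card Z'" "1 \<le> j" "j < J - 1" "(nx^^j) (nx u) \<in> Z'"
        then show "\<exists>j. 1 \<le> j \<and> j < J \<and> (nx^^j) u \<in> Z'"
          by (intro exI[of _ "Suc j"]) (auto simp: nx_swap)
      qed
      then have "card (Aset k P (nx u) (J - 1)) \<le> card (Aset k P u J)" using finA by (simp add: card_mono)
      then have cle: "card (Aset k P (nx u) (J - 1)) + 1 \<le> card (Aset k P u J) + 1" by simp
      from IH obtain ps where ps: "ps \<noteq> []" "hd ps = P" "length ps - 1 \<le> card (Aset k P (nx u) (J - 1)) + 1"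
       "\<forall>i < length ps - 1. recomb_move V E k s (ps ! i) (ps ! Suc i)"
       "num_fragments V c (last ps) < num_fragments V c P" by blast
      show ?thesis
        by (rule exI[of _ ps]) (use ps cle in auto)
    next
      case True
      define m where "m = card W"
      define e where "e = (nx^^m) u"
      define P' where "P' = (P - {{u}, W}) \<union> {{e}, arc u m}"
      have jp: "m < n" "W = arc (nx u) m" "recomb_move V E k s P P'" "BCP V E k s P'"
        "num_fragments V c P' = num_fragments V c P"
        using jump[OF P k s u W Wc True] unfolding P'_def e_def m_def by auto
      have m2: "2 \<le> m" using True m_def by simp
      have ctu: "contiguous n c {u}" using arc_contig[of u 1] uV n3 arc_one by auto
      have Zu: "Z \<noteq> {u}" using Z ctu by auto
      have ZW: "Z \<noteq> W" using Z Wc by auto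
      have Jm: "m < J"
      proof (rule ccontr)
        assume "\<not> m < J"
        then have "J - 1 < m" using J1 by simp
        then have "(nx^^(J - 1)) (nx u) \<in> W" using jp(2) arc_memI by simp
        moreover have "(nx^^(J - 1)) (nx u) = (nx^^J) u" using nx_swap J1
          by (metis Suc_diff_1 less_le_trans zero_less_one)
        ultimately have "Z = W" using pf(3)[OF Z(1) W(1)] Z(2) by simp
        then show False using ZW by simp
      qed
      have shift: "(nx^^j) e = (nx^^(j + m)) u" for j unfolding e_def by (simp add: funpow_add)
      have e': "{e} \<in> P'" unfolding P'_def by simp
      have IH: "\<exists>ps. ps \<noteq> [] \<and> hd ps = P' \<and> length ps - 1 \<le> card (Aset k P' e (J - m)) + 1 \<and>
       (\<forall>i < length ps - 1. recomb_move V E k s (ps ! i) (ps ! Suc i)) \<and>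
       num_fragments V c (last ps) < num_fragments V c P'"
      proof (rule less.IH[OF _ jp(4) e'])
        show "J - m < J" using Jm m2 by simp
        show "1 \<le> J - m" using Jm by simp
        show "J - m < n" using Jn by simp
        show "\<forall>j. 1 \<le> j \<longrightarrow> j < J - m \<longrightarrow> (\<forall>Z\<in>P'. (nx^^j) e \<in> Z \<longrightarrow> contiguous n c Z)"
        proof (intro allI impI ballI)
          fix j Z' assume j: "1 \<le> j" "j < J - m" and Z': "Z' \<in> P'" "(nx^^j) e \<in> Z'"
          show "contiguous n c Z'"
          proof (cases "Z' \<in> P - {{u}, W}")
            case True
            then have "Z' \<in> P" by simp
            moreover have "(nx^^(j + m)) u \<in> Z'" using Z'(2) shift[of j] by simp
            moreover have "1 \<le> j + m" "j + m < J" using j by auto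
            ultimately show ?thesis using hyp[rule_format, of "j + m" Z'] by simp
          next
            case False
            then have "Z' = {e} \<or> Z' = arc u m" using Z' P'_def by auto
            then show ?thesis
            proof
              assume "Z' = {e}"
              then show ?thesis using arc_contig[of e 1] nxpow_in[OF uV] e_def n3 arc_one by auto
            next
              assume "Z' = arc u m"
              then show ?thesis using arc_contig[OF uV] m2 jp(1) by simp
            qed
          qed
        qed
        have "Z \<in> P'" using Z Zu ZW unfolding P'_def by auto
        then show "\<exists>Z\<in>P'. (nx^^(J - m)) e \<in> Z \<and> \<not> contiguous n c Z"
          using Z shift[of "J - m"] Jm by auto
      qed
      then obtain ps' where ps': "ps' \<noteq> []" "hd ps' = P'"
        "length ps' - 1 \<le> card (Aset k P' e (J - m)) + 1"
        "\<forall>i < length ps' - 1. recomb_move V E k s (ps' ! i) (ps' ! Suc i)"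
        "num_fragments V c (last ps') < num_fragments V c P'" by blast
      have sub: "Aset k P' e (J - m) \<subseteq> Aset k P u J - {W}"
      proof
        fix Z' assume "Z' \<in> Aset k P' e (J - m)"
        then obtain j where Z': "Z' \<in> P'" "2 \<le> card Z'" "1 \<le> j" "j < J - m" "(nx^^j) e \<in> Z'"
          unfolding Aset_def by auto
        have "Z' \<noteq> {e}" using Z' by auto
        moreover have "Z' \<noteq> arc u m"
        proof
          assume "Z' = arc u m"
          then obtain t where t: "t < m" "(nx^^(j + m)) u = (nx^^t) u" using Z' shift arc_mem by auto
          have "j + m = t" by (rule pos_inj[OF uV]) (use t Z' Jn jp(1) in auto)
          then show False using t by simp
        qed
        ultimately have "Z' \<in> P - {{u}, W}" using Z' P'_def by auto
        then show "Z' \<in> Aset k P u J - {W}" unfolding Aset_def using Z' shift[of j]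
          by (auto intro!: exI[of _ "j + m"])
      qed
      have WA: "W \<in> Aset k P u J" unfolding Aset_def using W True J2
        by (auto intro!: exI[of _ 1])
      have "card (Aset k P' e (J - m)) \<le> card (Aset k P u J - {W})"
        using sub finA by (simp add: card_mono)
      also have "\<dots> = card (Aset k P u J) - 1" using WA finA by simp
      finally have cA: "card (Aset k P' e (J - m)) + 1 \<le> card (Aset k P u J)"
        using WA finA by (metis One_nat_def Suc_leI card_gt_0_iff empty_iff le_diff_conv2)
      show ?thesis
      proof (intro exI[of _ "P # ps'"] conjI)
        show "P # ps' \<noteq> []" by simp
        show "hd (P # ps') = P" by simp
        show "length (P # ps') - 1 \<le> card (Aset k P u J) + 1" using ps'(1,3) cA by auto
        show "\<forall>i < length (P # ps') - 1. recomb_move V E k s ((P # ps') ! i) ((P # ps') ! Suc i)"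
          using chain_Cons[OF ps'(1)] ps'(2,4) jp(3) by simp
        show "num_fragments V c (last (P # ps')) < num_fragments V c P"
          using ps'(1,5) jp(5) by simp
      qed
    qed
  qed
qed

end

theorem mainTheorem8:
  fixes V :: "'a set" and E :: "'a \<Rightarrow> 'a \<Rightarrow> bool" and c :: "nat \<Rightarrow> 'a"
    and k :: nat and s :: real and P :: "'a set set"
  assumes "graph V E"
    and "hamilton_cycle V E c"
    and "k \<ge> 2" and "k dvd card V"
    and "s \<ge> real (card V) / real k"
    and "BCP V E k s P"
    and "\<not> canonical V c P"
    and "\<exists>U\<in>P. card U = 1"
  shows "\<exists>ps. ps \<noteq> [] \<and> hd ps = P \<and> length ps - 1 \<le> k - 1 \<and>
           (\<forall>i < length ps - 1. recomb_move V E k s (ps ! i) (ps ! Suc i)) \<and>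
           num_fragments V c (last ps) < num_fragments V c P"
proof -
  interpret hc V E c using assms(1,2) by unfold_locales
  note P = assms(6) and k = assms(3) and s = assms(5)
  obtain U where U: "U \<in> P" "card U = 1" using assms(8) by auto
  then obtain v where Uv: "U = {v}" by (metis card_1_singletonE)
  have vP: "{v} \<in> P" using U Uv by simp
  obtain D where D: "D \<in> P" "\<not> contiguous n c D" using assms(7) unfolding canonical_def by auto
  note pf = P_facts[OF P]
  have vV: "v \<in> V" using pf(1) vP by auto
  obtain d where d: "d \<in> D" using pf(2)[OF D(1)] by auto
  have dV: "d \<in> V" using pf(1) D(1) d by auto
  obtain j0 where j0: "j0 < n" "(nx^^j0) v = d" using surj_pos[OF vV dV] by auto
  have ctv: "contiguous n c {v}" using arc_contig[of v 1] vV n3 arc_one by auto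
  have "j0 \<noteq> 0"
  proof
    assume "j0 = 0"
    then have "v \<in> D" using j0 d by simp
    then have "D = {v}" using pf(3)[OF D(1) vP, of v] by simp
    then show False using D ctv by simp
  qed
  define Qp where "Qp j \<longleftrightarrow> 1 \<le> j \<and> (\<exists>Z\<in>P. (nx^^j) v \<in> Z \<and> \<not> contiguous n c Z)" for j
  have Qj0: "Qp j0" unfolding Qp_def using \<open>j0 \<noteq> 0\<close> j0 d D by auto
  define J where "J = (LEAST j. Qp j)"
  have QJ: "Qp J" unfolding J_def using Qj0 by (rule LeastI)
  have Jle: "J \<le> j0" unfolding J_def using Qj0 by (rule Least_le)
  have hyp: "\<forall>j. 1 \<le> j \<longrightarrow> j < J \<longrightarrow> (\<forall>Z\<in>P. (nx^^j) v \<in> Z \<longrightarrow> contiguous n c Z)"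
  proof (intro allI impI ballI)
    fix j Z assume j: "1 \<le> j" "j < J" and Z: "Z \<in> P" "(nx^^j) v \<in> Z"
    have "\<not> Qp j" using j(2) unfolding J_def by (rule not_less_Least)
    then show "contiguous n c Z" using j Z unfolding Qp_def by auto
  qed
  obtain ZJ where ZJ: "ZJ \<in> P" "(nx^^J) v \<in> ZJ" "\<not> contiguous n c ZJ" using QJ unfolding Qp_def by auto
  have J1: "1 \<le> J" using QJ unfolding Qp_def by simp
  have Jn: "J < n" using Jle j0 by simp
  obtain ps where ps: "ps \<noteq> []" "hd ps = P" "length ps - 1 \<le> card (Aset k P v J) + 1"
    "\<forall>i < length ps - 1. recomb_move V E k s (ps ! i) (ps ! Suc i)"
    "num_fragments V c (last ps) < num_fragments V c P"
    using walk[OF k s P vP J1 Jn hyp] ZJ by blast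
  have sub: "Aset k P v J \<subseteq> P - {{v}, ZJ}"
  proof
    fix Z assume "Z \<in> Aset k P v J"
    then obtain j where Z: "Z \<in> P" "2 \<le> card Z" "1 \<le> j" "j < J" "(nx^^j) v \<in> Z"
      unfolding Aset_def by auto
    have "Z \<noteq> {v}" using Z(2) by auto
    moreover have "contiguous n c Z" using hyp Z by auto
    then have "Z \<noteq> ZJ" using ZJ by auto
    ultimately show "Z \<in> P - {{v}, ZJ}" using Z by auto
  qed
  have cP: "card P = k" using P unfolding BCP_def by simp
  have finP: "finite P" using cP k by (metis card.infinite not_numeral_le_zero)
  have vZ: "{v} \<noteq> ZJ" using ZJ ctv by auto
  have "card (P - {{v}, ZJ}) = k - 2" using cP vP ZJ(1) vZ finP by (simp add: card_Diff_subset)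
  then have "card (Aset k P v J) \<le> k - 2" using sub finP by (metis card_mono finite_Diff)
  then have "length ps - 1 \<le> k - 1" using ps(3) k by simp
  then show ?thesis using ps by blast
qed
end
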